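(* Let $R>0$ and let $E\subset\mathbb{R}^d$ be an $R$-supported body. Then $$\bigcap_{a\in\partial E} C^a_{\mathcal{N}_R(E,a)}=(\partial E_R)'_R .$$
   Context: A body is a nonempty closed subset of $\mathbb{R}^d$; $S^{d-1}$ is the unit sphere; $B(x)=\{y:|y-x|<R\}$. For $A\subset\mathbb{R}^d$, $A_R=\{x:\operatorname{dist}(x,A)<R\}$ and $A'_R=\{x:\operatorname{dist}(x,A)\ge R\}$ (with $\emptyset'_R=\mathbb{R}^d$). For a body $A$ and $a\in\partial A$, $\mathcal{N}_R(A,a)=\{v\in S^{d-1}: A\cap B(a+Rv)=\emptyset\}$; $A$ is $R$-supported if $\mathcal{N}_R(A,a)\ne\emptyset$ for all $a\in\partial A$. For a nonempty closed $\mathcal K\subset S^{d-1}$ and $x\in\mathbb{R}^d$, the $R$-cone with vertex $x$ is $C^x_{\mathcal K}=\bigcap_{v\in\mathcal K}(\mathbb{R}^d\setminus B(x+Rv))$, and $C_{\mathcal K}=C^o_{\mathcal K}$. An intersection over an empty index set is $\mathbb{R}^d$. *)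

theory Defs
  imports "HOL-Analysis.Analysis"
begin

definition body :: "'a::euclidean_space set \<Rightarrow> bool" where
  "body A \<longleftrightarrow> A \<noteq> {} \<and> closed A"

definition nbhd :: "real \<Rightarrow> 'a::euclidean_space set \<Rightarrow> 'a set" where
  "nbhd R A = {x. infdist x A < R}"

definition far_set :: "real \<Rightarrow> 'a::euclidean_space set \<Rightarrow> 'a set" where
  "far_set R A = (if A = {} then UNIV else {x. infdist x A \<ge> R})"

definition normals :: "real \<Rightarrow> 'a::euclidean_space set \<Rightarrow> 'a \<Rightarrow> 'a set" where
  "normals R A a = {v \<in> sphere 0 1. A \<inter> ball (a + R *\<^sub>R v) R = {}}"

definition R_supported :: "real \<Rightarrow> 'a::euclidean_space set \<Rightarrow> bool" where
  "R_supported R A \<longleftrightarrow> body A \<and> (\<forall>a \<in> frontier A. normals R A a \<noteq> {})"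

definition R_cone :: "real \<Rightarrow> 'a::euclidean_space set \<Rightarrow> 'a \<Rightarrow> 'a set" where
  "R_cone R K x = (\<Inter>v\<in>K. - ball (x + R *\<^sub>R v) R)"

end

theory Submission
  imports Defs
begin

lemma infdist_geI:
  assumes "A \<noteq> {}" "\<And>a. a \<in> A \<Longrightarrow> r \<le> dist x a"
  shows "r \<le> infdist x A"
  using assms by (simp add: infdist_notempty cINF_greatest)

lemma nbhd_open: "open (nbhd R E)"
  unfolding nbhd_def
  by (rule open_Collect_less) (auto intro!: continuous_intros)

lemma frontier_nbhd_iff:
  "y \<in> frontier (nbhd R E) \<longleftrightarrow> y \<in> closure (nbhd R E) \<and> infdist y E \<ge> R"
  using nbhd_open[of R E] by (auto simp: frontier_def interior_open nbhd_def)

lemma closure_nbhd_le: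
  assumes "y \<in> closure (nbhd R E)" shows "infdist y E \<le> R"
proof (rule field_le_epsilon)
  fix e :: real assume "e > 0"
  then obtain z where z: "z \<in> nbhd R E" "dist z y < e"
    using assms closure_approachable by blast
  have "infdist y E \<le> infdist z E + dist y z" by (rule infdist_triangle)
  then show "infdist y E \<le> R + e" using z by (simp add: nbhd_def dist_commute)
qed

lemma seg_point:
  fixes a v :: "'a::euclidean_space"
  assumes "norm v = 1"
  shows "dist (a + (R - d) *\<^sub>R v) (a + R *\<^sub>R v) = \<bar>d\<bar>"
    and "dist (a + (R - d) *\<^sub>R v) a = \<bar>R - d\<bar>"
proof -
  have "(a + (R - d) *\<^sub>R v) - (a + R *\<^sub>R v) = (- d) *\<^sub>R v"
    by (simp add: algebra_simps)
  then show "dist (a + (R - d) *\<^sub>R v) (a + R *\<^sub>R v) = \<bar>d\<bar>"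
    by (simp add: dist_norm assms)
  have "(a + (R - d) *\<^sub>R v) - a = (R - d) *\<^sub>R v" by simp
  then show "dist (a + (R - d) *\<^sub>R v) a = \<bar>R - d\<bar>"
    by (simp add: dist_norm assms)
qed

lemma centers_in:
  fixes E :: "'a::euclidean_space set"
  assumes R: "R > 0" and cl: "closed E" and a: "a \<in> frontier E" and v: "v \<in> normals R E a"
  shows "a + R *\<^sub>R v \<in> frontier (nbhd R E)"
proof -
  have aE: "a \<in> E" using a cl frontier_subset_closed by blast
  have nv: "norm v = 1" and disj: "E \<inter> ball (a + R *\<^sub>R v) R = {}"
    using v by (auto simp: normals_def)
  have ge: "R \<le> infdist (a + R *\<^sub>R v) E"
    using disj aE by (intro infdist_geI) (auto simp: mem_ball not_less)
  have cl2: "a + R *\<^sub>R v \<in> closure (nbhd R E)"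
    unfolding closure_approachable
  proof (intro allI impI)
    fix e :: real assume e: "e > 0"
    define d where "d = min (e/2) (R/2)"
    have d: "0 < d" "d < e" "d < R" using e R by (auto simp: d_def)
    have "infdist (a + (R - d) *\<^sub>R v) E \<le> dist (a + (R - d) *\<^sub>R v) a"
      using aE by (rule infdist_le)
    also have "\<dots> = R - d" using seg_point(2)[OF nv, of a R d] d by simp
    finally have "a + (R - d) *\<^sub>R v \<in> nbhd R E" using d by (simp add: nbhd_def)
    moreover have "dist (a + (R - d) *\<^sub>R v) (a + R *\<^sub>R v) < e"
      using seg_point(1)[OF nv, of a R d] d by simp
    ultimately show "\<exists>y\<in>nbhd R E. dist y (a + R *\<^sub>R v) < e" by blast
  qed
  show ?thesis using ge cl2 frontier_nbhd_iff by blast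
qed

lemma centers_from:
  fixes E :: "'a::euclidean_space set"
  assumes R: "R > 0" and cl: "closed E" and ne: "E \<noteq> {}" and y: "y \<in> frontier (nbhd R E)"
  shows "\<exists>a\<in>frontier E. \<exists>v\<in>normals R E a. y = a + R *\<^sub>R v"
proof -
  have iy: "infdist y E = R"
    using y frontier_nbhd_iff closure_nbhd_le by (metis order_antisym)
  obtain a where aE: "a \<in> E" and amin: "\<And>z. z \<in> E \<Longrightarrow> dist y a \<le> dist y z"
    using distance_attains_inf[OF cl ne, of y] by blast
  have "infdist y E = dist y a"
  proof (rule order_antisym)
    show "infdist y E \<le> dist y a" using aE by (rule infdist_le)
    show "dist y a \<le> infdist y E" using ne amin by (intro infdist_geI) auto
  qed
  hence dya: "dist y a = R" using iy by simp
  define v where "v = (1 / R) *\<^sub>R (y - a)"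
  have yv: "y = a + R *\<^sub>R v" using R by (simp add: v_def)
  have nv: "norm v = 1" using R dya by (simp add: v_def dist_norm norm_minus_commute)
  have far: "\<And>z. z \<in> E \<Longrightarrow> R \<le> dist y z" using amin dya by metis
  have vn: "v \<in> normals R E a"
    unfolding normals_def using nv far yv[symmetric] by (auto simp: mem_ball not_less[symmetric])
  have "a \<notin> interior E"
  proof
    assume "a \<in> interior E"
    then obtain e where e: "e > 0" "ball a e \<subseteq> E" by (meson mem_interior)
    define d where "d = min (e/2) (R/2)"
    have d: "0 < d" "d < e" "d < R" using e R by (auto simp: d_def)
    have "dist (a + d *\<^sub>R v) a = d" using nv d by (simp add: dist_norm)
    hence "a + d *\<^sub>R v \<in> E" using e d by (auto simp: mem_ball dist_commute)
    moreover have "dist (a + (R - (R - d)) *\<^sub>R v) (a + R *\<^sub>R v) = R - d"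
      using seg_point(1)[OF nv, of a R "R - d"] d by simp
    ultimately show False using far[of "a + d *\<^sub>R v"] d yv by (simp add: dist_commute)
  qed
  hence "a \<in> frontier E" using aE cl by (simp add: frontier_def closure_closed)
  thus ?thesis using vn yv by blast
qed

theorem mainTheorem11:
  fixes E :: "'a::euclidean_space set" and R :: real
  assumes "R > 0" and "body E" and "R_supported R E"
  shows "(\<Inter>a\<in>frontier E. R_cone R (normals R E a) a) = far_set R (frontier (nbhd R E))"
proof -
  have cl: "closed E" and ne: "E \<noteq> {}" using assms(2) by (auto simp: body_def)
  let ?F = "frontier (nbhd R E)"
  have L: "(\<Inter>a\<in>frontier E. R_cone R (normals R E a) a) = {x. \<forall>y\<in>?F. R \<le> dist y x}"
  proof (intro set_eqI iffI)
    fix x assume x: "x \<in> (\<Inter>a\<in>frontier E. R_cone R (normals R E a) a)"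
    show "x \<in> {x. \<forall>y\<in>?F. R \<le> dist y x}"
    proof (safe)
      fix y assume "y \<in> ?F"
      then obtain a v where "a \<in> frontier E" "v \<in> normals R E a" "y = a + R *\<^sub>R v"
        using centers_from[OF assms(1) cl ne] by blast
      thus "R \<le> dist y x" using x by (auto simp: R_cone_def mem_ball not_less)
    qed
  next
    fix x assume x: "x \<in> {x. \<forall>y\<in>?F. R \<le> dist y x}"
    show "x \<in> (\<Inter>a\<in>frontier E. R_cone R (normals R E a) a)"
      using x centers_in[OF assms(1) cl] by (auto simp: R_cone_def mem_ball not_less)
  qed
  show ?thesis
  proof (cases "?F = {}")
    case True thus ?thesis using L by (simp add: far_set_def)
  next
    case False
    have "{x. \<forall>y\<in>?F. R \<le> dist y x} = {x. R \<le> infdist x ?F}"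
    proof (intro set_eqI iffI)
      fix x assume "x \<in> {x. \<forall>y\<in>?F. R \<le> dist y x}"
      thus "x \<in> {x. R \<le> infdist x ?F}" using False
        by (auto intro!: infdist_geI simp: dist_commute)
    next
      fix x assume "x \<in> {x. R \<le> infdist x ?F}"
      thus "x \<in> {x. \<forall>y\<in>?F. R \<le> dist y x}"
        using infdist_le[of _ ?F x] by (force simp: dist_commute)
    qed
    thus ?thesis using L False by (simp add: far_set_def)
  qed
qed

end
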